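(* Let $\alpha>0$, $\varepsilon>0$, and let $S_2$ be the feasible set produced by Phase B (after Phase A), before removing $S_2\cap D$. Then \[ \mathbb E[w(S_2\setminus D)]\ \ge\ (1-(1+1/\alpha)\varepsilon)\,\mathbb E[w(S_2)], \] where the expectation is over the random sampling in Phase A.
   Context: Setting. $V$ is a finite ground set of $n=|V|$ items arriving one at a time in a fixed stream order. $f:2^V\to\mathbb R_{\ge 0}$ is non-decreasing and submodular with $f(\emptyset)=0$; write $f(v\mid X)=f(X\cup\{v\})-f(X)$. $\mathcal M=\mathcal M_1\cap\dots\cap\mathcal M_p$ is the intersection of $p$ matroids $\mathcal M_1,\dots,\mathcal M_p$ on $V$ (a "$p$-matroid"); a set is feasible if it lies in $\mathcal M$; the rank is $r=\max_{S\in\mathcal M}|S|$. $d\ge 0$ is an integer and $D\subseteq V$ is a deletion set with $|D|\le d$, fixed in advance and independent of the algorithm's random bits (static adversary). Weights. Items receive a weight $w(v)\ge 0$ when processed, as specified below; for a set $S$, $w(S)=\sum_{u\in S}w(u)$ (with $w(\emptyset)=0$). Exchange$(v,I)$: for each $j\in[p]$ with $I\cup\{v\}\notin\mathcal M_j$, let $u_j\in\arg\min\{w(u): u\in I,\ (I\cup\{v\})\setminus\{u\}\in\mathcal M_j\}$; return the set $\{u_j\}$ of these items (empty if $I\cup\{v\}\in\mathcal M$). Phase A (streaming, parameters $\varepsilon,\alpha>0$): initialize $I=\emptyset$, $C=\emptyset$. For each arriving item $v'$ of $V$ in stream order: (1) $C\gets C\cup\{v'\}$; (2) $C\gets\{v\in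 C: f(v\mid I)\ge (1+\alpha)\,w(\mathrm{Exchange}(v,I))\}$; (3) if $|C|\ge d/\varepsilon$, sample one item $v\in C$ at random with probability proportional to $1/f(v\mid I)$, set $w(v)=f(v\mid I)$, and set $I\gets (I\cup\{v\})\setminus \mathrm{Exchange}(v,I)$. At the end output $S_1:=I$ and the buffer $C$. The coreset is $R=S_1\cup C$. Phase B (after deletions, parameter $\alpha$): start with $I=S_1$. For each $v\in C\setminus D$: set $w(v)=f(v\mid I)$, $S=\mathrm{Exchange}(v,I)$, and if $w(v)\ge(1+\alpha)w(S)$ set $I\gets(I\cup\{v\})\setminus S$. Let $S_2$ be the final $I$; output $\mathrm{ALG}=S_2\setminus D$. *)

theory Defs
  imports "HOL-Probability.Probability"
begin

definition marg :: "('a set \<Rightarrow> real) \<Rightarrow> 'a \<Rightarrow> 'a set \<Rightarrow> real" where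
  "marg f v X = f (insert v X) - f X"

definition monotone_set_fun :: "'a set \<Rightarrow> ('a set \<Rightarrow> real) \<Rightarrow> bool" where
  "monotone_set_fun V f \<longleftrightarrow> (\<forall>A B. A \<subseteq> B \<and> B \<subseteq> V \<longrightarrow> f A \<le> f B)"

definition submodular :: "'a set \<Rightarrow> ('a set \<Rightarrow> real) \<Rightarrow> bool" where
  "submodular V f \<longleftrightarrow> (\<forall>A B v. A \<subseteq> B \<and> B \<subseteq> V \<and> v \<in> V - B \<longrightarrow> marg f v B \<le> marg f v A)"

definition matroid :: "'a set \<Rightarrow> ('a set \<Rightarrow> bool) \<Rightarrow> bool" where
  "matroid E ind \<longleftrightarrow> finite E \<and> ind {} \<and> (\<forall>A. ind A \<longrightarrow> A \<subseteq> E)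
     \<and> (\<forall>A B. ind B \<and> A \<subseteq> B \<longrightarrow> ind A)
     \<and> (\<forall>A B. ind A \<and> ind B \<and> card A < card B \<longrightarrow> (\<exists>x\<in>B - A. ind (insert x A)))"

definition exch_cands :: "(nat \<Rightarrow> 'a set \<Rightarrow> bool) \<Rightarrow> nat \<Rightarrow> ('a \<Rightarrow> real) \<Rightarrow> 'a \<Rightarrow> 'a set \<Rightarrow> 'a set" where
  "exch_cands Ms j w v I = {u \<in> I. Ms j (insert v I - {u}) \<and>
      (\<forall>u'\<in>I. Ms j (insert v I - {u'}) \<longrightarrow> w u \<le> w u')}"

text \<open>The result is \<open>None\<close> iff for some violated matroid no valid exchange candidate exists
  (i.e. v can never be made feasible); such an item is never taken.\<close>
definition Exchange :: "nat \<Rightarrow> (nat \<Rightarrow> 'a set \<Rightarrow> bool) \<Rightarrow> ('a set \<Rightarrow> 'a) \<Rightarrow> ('a \<Rightarrow> real)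
    \<Rightarrow> 'a \<Rightarrow> 'a set \<Rightarrow> 'a set option" where
  "Exchange p Ms sel w v I =
     (let J = {j. j < p \<and> \<not> Ms j (insert v I)} in
      if \<exists>j\<in>J. exch_cands Ms j w v I = {} then None
      else Some ((\<lambda>j. sel (exch_cands Ms j w v I)) ` J))"

definition keep :: "('a set \<Rightarrow> real) \<Rightarrow> nat \<Rightarrow> (nat \<Rightarrow> 'a set \<Rightarrow> bool) \<Rightarrow> ('a set \<Rightarrow> 'a)
    \<Rightarrow> real \<Rightarrow> ('a \<Rightarrow> real) \<Rightarrow> 'a set \<Rightarrow> 'a \<Rightarrow> bool" where
  "keep f p Ms sel \<alpha> w I v = (case Exchange p Ms sel w v I of
       None \<Rightarrow> False
     | Some S \<Rightarrow> marg f v I \<ge> (1 + \<alpha>) * sum w S)"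

text \<open>If some items have
  \<open>g v = 0\<close> (weight \<open>1/0 = \<infinity>\<close>), sample uniformly among those (limit semantics).\<close>
definition sample_pmf :: "('a \<Rightarrow> real) \<Rightarrow> 'a set \<Rightarrow> 'a pmf" where
  "sample_pmf g C = (let Z = {v \<in> C. g v = 0} in
     if Z \<noteq> {} then pmf_of_set Z
     else embed_pmf (\<lambda>v. if v \<in> C then (1 / g v) / (\<Sum>u\<in>C. 1 / g u) else 0))"

type_synonym 'a stateA = "'a set \<times> 'a set \<times> ('a \<Rightarrow> real)"

definition phaseA_step :: "('a set \<Rightarrow> real) \<Rightarrow> nat \<Rightarrow> (nat \<Rightarrow> 'a set \<Rightarrow> bool) \<Rightarrow> ('a set \<Rightarrow> 'a)
    \<Rightarrow> real \<Rightarrow> real \<Rightarrow> nat \<Rightarrow> 'a \<Rightarrow> 'a stateA \<Rightarrow> 'a stateA pmf" where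
  "phaseA_step f p Ms sel \<alpha> \<epsilon> d v' st = (case st of (I, C, w) \<Rightarrow>
     (let C1 = insert v' C;
          C2 = {v \<in> C1. keep f p Ms sel \<alpha> w I v}
      in if C2 \<noteq> {} \<and> real (card C2) \<ge> real d / \<epsilon> then
           map_pmf (\<lambda>v. ((I \<union> {v}) - the (Exchange p Ms sel w v I), C2 - {v}, w(v := marg f v I)))
                   (sample_pmf (\<lambda>v. marg f v I) C2)
         else return_pmf (I, C2, w)))"

fun phaseA_run :: "('a set \<Rightarrow> real) \<Rightarrow> nat \<Rightarrow> (nat \<Rightarrow> 'a set \<Rightarrow> bool) \<Rightarrow> ('a set \<Rightarrow> 'a)
    \<Rightarrow> real \<Rightarrow> real \<Rightarrow> nat \<Rightarrow> 'a list \<Rightarrow> 'a stateA \<Rightarrow> 'a stateA pmf" where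
  "phaseA_run f p Ms sel \<alpha> \<epsilon> d [] st = return_pmf st"
| "phaseA_run f p Ms sel \<alpha> \<epsilon> d (x # xs) st =
     bind_pmf (phaseA_step f p Ms sel \<alpha> \<epsilon> d x st) (phaseA_run f p Ms sel \<alpha> \<epsilon> d xs)"

text \<open>Phase A on the stream \<open>xs\<close>, from \<open>I = {}\<close>, \<open>C = {}\<close>, no weights assigned (0).
  Outcome: (S_1, C, weights).\<close>
definition phaseA :: "('a set \<Rightarrow> real) \<Rightarrow> nat \<Rightarrow> (nat \<Rightarrow> 'a set \<Rightarrow> bool) \<Rightarrow> ('a set \<Rightarrow> 'a)
    \<Rightarrow> real \<Rightarrow> real \<Rightarrow> nat \<Rightarrow> 'a list \<Rightarrow> 'a stateA pmf" where
  "phaseA f p Ms sel \<alpha> \<epsilon> d xs = phaseA_run f p Ms sel \<alpha> \<epsilon> d xs ({}, {}, (\<lambda>_. 0))"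

fun phaseB_run :: "('a set \<Rightarrow> real) \<Rightarrow> nat \<Rightarrow> (nat \<Rightarrow> 'a set \<Rightarrow> bool) \<Rightarrow> ('a set \<Rightarrow> 'a)
    \<Rightarrow> real \<Rightarrow> 'a list \<Rightarrow> 'a set \<times> ('a \<Rightarrow> real) \<Rightarrow> 'a set \<times> ('a \<Rightarrow> real)" where
  "phaseB_run f p Ms sel \<alpha> [] st = st"
| "phaseB_run f p Ms sel \<alpha> (v # vs) (I, w) =
     (let w' = w(v := marg f v I) in
      case Exchange p Ms sel w' v I of
        None \<Rightarrow> phaseB_run f p Ms sel \<alpha> vs (I, w')
      | Some S \<Rightarrow>
          (if w' v \<ge> (1 + \<alpha>) * sum w' S
           then phaseB_run f p Ms sel \<alpha> vs ((I \<union> {v}) - S, w')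
           else phaseB_run f p Ms sel \<alpha> vs (I, w')))"

definition phaseB :: "('a set \<Rightarrow> real) \<Rightarrow> nat \<Rightarrow> (nat \<Rightarrow> 'a set \<Rightarrow> bool) \<Rightarrow> ('a set \<Rightarrow> 'a)
    \<Rightarrow> real \<Rightarrow> 'a list \<Rightarrow> 'a set \<Rightarrow> 'a stateA \<Rightarrow> 'a set \<times> ('a \<Rightarrow> real)" where
  "phaseB f p Ms sel \<alpha> xs D st = (case st of (S1, C, w) \<Rightarrow>
     phaseB_run f p Ms sel \<alpha> (filter (\<lambda>v. v \<in> C - D) xs) (S1, w))"

end

theory Submission imports Defs begin

lemma sum_upd: "finite A \<Longrightarrow> x \<in> A \<Longrightarrow> sum (w(x:=c)) A = sum w A - w x + (c::real)"
proof -
  assume a: "finite A" "x \<in> A"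
  have "sum (w(x:=c)) A = (w(x:=c)) x + sum (w(x:=c)) (A - {x})" using a by (simp add: sum.remove)
  also have "sum (w(x:=c)) (A - {x}) = sum w (A - {x})" by (intro sum.cong) auto
  also have "sum w (A - {x}) = sum w A - w x" using a by (simp add: sum_diff1)
  finally show ?thesis by simp
qed

lemma sum_upd_out: "x \<notin> A \<Longrightarrow> sum (w(x:=c)) A = sum w A"
  by (intro sum.cong) auto

lemma exch_subset:
  assumes "\<forall>A. A \<noteq> {} \<longrightarrow> sel A \<in> A" "Exchange p Ms sel w v I = Some S"
  shows "S \<subseteq> I"
proof -
  let ?J = "{j. j < p \<and> \<not> Ms j (insert v I)}"
  from assms(2) have ne: "\<forall>j\<in>?J. exch_cands Ms j w v I \<noteq> {}"
    and S: "S = (\<lambda>j. sel (exch_cands Ms j w v I)) ` ?J"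
    unfolding Exchange_def Let_def by (auto split: if_splits)
  show ?thesis
  proof
    fix u assume "u \<in> S"
    then obtain j where j: "j \<in> ?J" "u = sel (exch_cands Ms j w v I)" using S by blast
    then have "u \<in> exch_cands Ms j w v I" using ne assms(1) by auto
    then show "u \<in> I" unfolding exch_cands_def by auto
  qed
qed

lemma marg_nonneg:
  assumes "monotone_set_fun V f" "insert v I \<subseteq> V"
  shows "marg f v I \<ge> 0"
  using assms unfolding monotone_set_fun_def marg_def by (metis diff_ge_0_iff_ge subset_insertI)

lemma sample_set:
  assumes "finite C" "C \<noteq> {}" "\<forall>v\<in>C. g v \<ge> 0"
  shows "set_pmf (sample_pmf g C) \<subseteq> C"
    and "{v\<in>C. g v = 0} = {} \<Longrightarrow> pmf (sample_pmf g C) x = (if x \<in> C then (1 / g x) / (\<Sum>u\<in>C. 1 / g u) else 0)"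
    and "{v\<in>C. g v = 0} \<noteq> {} \<Longrightarrow> set_pmf (sample_pmf g C) = {v\<in>C. g v = 0}"
proof -
  let ?F = "\<lambda>v. if v \<in> C then (1 / g v) / (\<Sum>u\<in>C. 1 / g u) else 0"
  {
    assume Z: "{v\<in>C. g v = 0} = {}"
    have pos: "\<forall>v\<in>C. g v > 0" using Z assms(3) by force
    have Spos: "(\<Sum>u\<in>C. 1 / g u) > 0" using pos assms(1,2) by (intro sum_pos) auto
    have nn: "\<And>x. 0 \<le> ?F x" using pos Spos by auto
    have "(\<integral>\<^sup>+x. ennreal (?F x) \<partial>count_space UNIV) = (\<Sum>x\<in>C. ennreal (?F x))"
      using assms(1) by (intro nn_integral_count_space') (use pos Spos in auto)
    also have "\<dots> = ennreal (\<Sum>x\<in>C. ?F x)" by (rule sum_ennreal) (rule nn)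
    also have "(\<Sum>x\<in>C. ?F x) = (\<Sum>x\<in>C. (1 / g x) / (\<Sum>u\<in>C. 1 / g u))" by (intro sum.cong) auto
    also have "\<dots> = (\<Sum>x\<in>C. 1 / g x) / (\<Sum>u\<in>C. 1 / g u)" by (rule sum_divide_distrib[symmetric])
    also have "\<dots> = 1" using Spos by simp
    finally have prob: "(\<integral>\<^sup>+x. ennreal (?F x) \<partial>count_space UNIV) = 1" by simp
    have eq: "sample_pmf g C = embed_pmf ?F" using Z unfolding sample_pmf_def Let_def by simp
    have P: "pmf (sample_pmf g C) x = ?F x" for x unfolding eq by (rule pmf_embed_pmf[OF nn prob])
    have "set_pmf (sample_pmf g C) \<subseteq> C" unfolding eq using set_embed_pmf[OF nn prob] by auto
    note P this
  } note r = this
  show "{v\<in>C. g v = 0} = {} \<Longrightarrow> pmf (sample_pmf g C) x = ?F x" using r by blast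
  show "{v\<in>C. g v = 0} \<noteq> {} \<Longrightarrow> set_pmf (sample_pmf g C) = {v\<in>C. g v = 0}"
    using assms(1) unfolding sample_pmf_def Let_def by simp
  show "set_pmf (sample_pmf g C) \<subseteq> C"
  proof (cases "{v\<in>C. g v = 0} = {}")
    case True then show ?thesis using r by blast
  next
    case False then show ?thesis using assms(1) unfolding sample_pmf_def Let_def by auto
  qed
qed

lemma sample_exp:
  fixes \<epsilon> :: real
  assumes "finite C" "C \<noteq> {}" "\<forall>v\<in>C. g v \<ge> 0" "real (card (C \<inter> D)) \<le> \<epsilon> * card C"
  shows "measure_pmf.expectation (sample_pmf g C) (\<lambda>v. (\<epsilon> - indicator D v) * g v) \<ge> 0"
proof (cases "{v\<in>C. g v = 0} = {}")
  case False
  have "measure_pmf.expectation (sample_pmf g C) (\<lambda>v. (\<epsilon> - indicator D v) * g v) = (\<Sum>a\<in>{}. (\<epsilon> - indicator D a) * g a * pmf (sample_pmf g C) a)"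
    by (rule integral_measure_pmf_real) (use sample_set(3)[OF assms(1-3) False] in auto)
  then show ?thesis by simp
next
  case True
  have pos: "\<forall>v\<in>C. g v > 0" using True assms(3) by force
  define S where "S = (\<Sum>u\<in>C. 1 / g u)"
  have Spos: "S > 0" unfolding S_def using pos assms(1,2) by (intro sum_pos) auto
  have "measure_pmf.expectation (sample_pmf g C) (\<lambda>v. (\<epsilon> - indicator D v) * g v)
     = (\<Sum>a\<in>C. (\<epsilon> - indicator D a) * g a * pmf (sample_pmf g C) a)"
    by (rule integral_measure_pmf_real) (use sample_set(1)[OF assms(1-3)] assms(1) in auto)
  also have "\<dots> = (\<Sum>a\<in>C. (\<epsilon> - indicator D a) / S)"
    using pos by (intro sum.cong) (auto simp: sample_set(2)[OF assms(1-3) True] S_def)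
  also have "\<dots> = (\<epsilon> * card C - card (C \<inter> D)) / S"
  proof -
    have "(\<Sum>a\<in>C. indicator D a) = (real (card (C \<inter> D)))" using assms(1) by (simp add: sum.inter_restrict indicator_def)
    then show ?thesis by (simp add: sum_divide_distrib[symmetric] sum_subtractf)
  qed
  also have "\<dots> \<ge> 0" using Spos assms(4) by simp
  finally show ?thesis .
qed


lemma int_bind_fin:
  fixes F :: "'b \<Rightarrow> real"
  assumes "finite (set_pmf M)" "\<forall>x\<in>set_pmf M. finite (set_pmf (N x))"
  shows "measure_pmf.expectation (bind_pmf M N) F = measure_pmf.expectation M (\<lambda>x. measure_pmf.expectation (N x) F)"
proof -
  let ?A = "set_pmf M"
  let ?B = "\<Union>x\<in>?A. set_pmf (N x)"
  have fB: "finite ?B" using assms by auto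
  have pb: "pmf (bind_pmf M N) b = (\<Sum>a\<in>?A. pmf (N a) b * pmf M a)" for b
    unfolding pmf_bind by (rule integral_measure_pmf_real) (use assms in auto)
  have "measure_pmf.expectation (bind_pmf M N) F = (\<Sum>b\<in>?B. F b * pmf (bind_pmf M N) b)"
    by (rule integral_measure_pmf_real) (use fB in auto)
  also have "\<dots> = (\<Sum>b\<in>?B. \<Sum>a\<in>?A. F b * pmf (N a) b * pmf M a)"
    by (simp add: pb sum_distrib_left mult.assoc)
  also have "\<dots> = (\<Sum>a\<in>?A. \<Sum>b\<in>?B. F b * pmf (N a) b * pmf M a)"
    by (rule sum.swap)
  also have "\<dots> = (\<Sum>a\<in>?A. measure_pmf.expectation (N a) F * pmf M a)"
  proof (intro sum.cong refl)
    fix a assume a: "a \<in> ?A"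
    have "measure_pmf.expectation (N a) F = (\<Sum>b\<in>?B. F b * pmf (N a) b)"
      by (rule integral_measure_pmf_real) (use fB a in auto)
    then show "(\<Sum>b\<in>?B. F b * pmf (N a) b * pmf M a) = measure_pmf.expectation (N a) F * pmf M a"
      by (simp add: sum_distrib_right)
  qed
  also have "\<dots> = measure_pmf.expectation M (\<lambda>x. measure_pmf.expectation (N x) F)"
    by (rule integral_measure_pmf_real[symmetric]) (use assms in auto)
  finally show ?thesis .
qed

lemma phaseB_props:
  assumes mono: "monotone_set_fun V f" and selA: "\<forall>A. A \<noteq> {} \<longrightarrow> sel A \<in> A" and apos: "\<alpha> > 0"
  shows "distinct vs \<Longrightarrow> set vs \<inter> I = {} \<Longrightarrow> I \<union> set vs \<subseteq> V \<Longrightarrow> finite V \<Longrightarrow> \<forall>u. w u \<ge> 0 \<Longrightarrow>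
    phaseB_run f p Ms sel \<alpha> vs (I, w) = (I2, w2) \<Longrightarrow>
    I2 \<subseteq> I \<union> set vs \<and> (\<forall>u. u \<notin> set vs \<longrightarrow> w2 u = w u) \<and> sum w I \<le> sum w2 I2 \<and> (\<forall>u. w2 u \<ge> 0)"
proof (induction vs arbitrary: I w)
  case Nil
  then show ?case by simp
next
  case (Cons v vs)
  define g where "g = marg f v I"
  define w' where "w' = w(v := g)"
  have vI: "v \<notin> I" using Cons.prems by auto
  have g0: "g \<ge> 0" unfolding g_def by (rule marg_nonneg[OF mono]) (use Cons.prems in auto)
  have w'0: "\<forall>u. w' u \<ge> 0" using g0 Cons.prems unfolding w'_def by auto
  have fI: "finite I" using Cons.prems finite_subset by blast
  have sI: "sum w' I = sum w I" unfolding w'_def using vI by (rule sum_upd_out)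
  have rej: "phaseB_run f p Ms sel \<alpha> vs (I, w') = (I2, w2) \<Longrightarrow> ?case"
  proof -
    assume r: "phaseB_run f p Ms sel \<alpha> vs (I, w') = (I2, w2)"
    have "I2 \<subseteq> I \<union> set vs \<and> (\<forall>u. u \<notin> set vs \<longrightarrow> w2 u = w' u) \<and> sum w' I \<le> sum w2 I2 \<and> (\<forall>u. w2 u \<ge> 0)"
      by (rule Cons.IH) (use Cons.prems w'0 r in auto)
    then show ?case using sI unfolding w'_def by auto
  qed
  show ?case
  proof (cases "Exchange p Ms sel w' v I")
    case None
    then show ?thesis using Cons.prems(6) rej by (simp add: Let_def w'_def g_def)
  next
    case (Some S)
    have SI: "S \<subseteq> I" by (rule exch_subset[OF selA Some])
    show ?thesis
    proof (cases "w' v \<ge> (1 + \<alpha>) * sum w' S")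
      case False
      then show ?thesis using Cons.prems(6) rej Some by (simp add: Let_def w'_def g_def)
    next
      case True
      let ?I' = "(I \<union> {v}) - S"
      have r: "phaseB_run f p Ms sel \<alpha> vs (?I', w') = (I2, w2)"
        using Cons.prems(6) True Some by (simp add: Let_def w'_def g_def)
      have IH: "I2 \<subseteq> ?I' \<union> set vs \<and> (\<forall>u. u \<notin> set vs \<longrightarrow> w2 u = w' u) \<and> sum w' ?I' \<le> sum w2 I2 \<and> (\<forall>u. w2 u \<ge> 0)"
        by (rule Cons.IH) (use Cons.prems w'0 r SI in auto)
      have vS: "v \<notin> S" using SI vI by auto
      have sS: "sum w' S = sum w S" unfolding w'_def using vS by (rule sum_upd_out)
      have fS: "finite S" using fI SI finite_subset by blast
      have SS0: "sum w S \<ge> 0" using Cons.prems(5) by (simp add: sum_nonneg)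
      have I'eq: "?I' = insert v (I - S)" using vS by auto
      have "sum w' ?I' = g + sum w (I - S)"
        unfolding I'eq using vI fI by (simp add: w'_def) (intro sum.cong, auto)
      also have "sum w (I - S) = sum w I - sum w S" using fI SI by (simp add: sum_diff)
      finally have e: "sum w' ?I' = g + sum w I - sum w S" by simp
      have "g \<ge> (1 + \<alpha>) * sum w S" using True sS by (simp add: w'_def)
      moreover have "0 \<le> \<alpha> * sum w S" using apos SS0 by simp
      ultimately have "g \<ge> sum w S" by (simp add: algebra_simps)
      then show ?thesis using IH e unfolding w'_def by auto
    qed
  qed
qed


definition invA :: "'a list \<Rightarrow> real \<Rightarrow> 'a list \<Rightarrow> 'a stateA \<Rightarrow> bool" where
  "invA xs \<alpha> ys st = (case st of (I, C, w) \<Rightarrow> set ys \<subseteq> set xs \<and> distinct ys \<and> I \<subseteq> set xs \<and> C \<subseteq> set xs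
     \<and> I \<inter> C = {} \<and> I \<inter> set ys = {} \<and> C \<inter> set ys = {} \<and> (\<forall>v\<in>C \<union> set ys. w v = 0)
     \<and> (\<forall>v. w v \<ge> 0) \<and> sum w (set xs) \<le> (1 + 1 / \<alpha>) * sum w I)"

definition QA :: "'a list \<Rightarrow> real \<Rightarrow> 'a set \<Rightarrow> 'a stateA \<Rightarrow> real" where
  "QA xs \<epsilon> D st = (case st of (I, C, w) \<Rightarrow> \<epsilon> * sum w (set xs) - sum w D)"

lemma step_props:
  assumes mono: "monotone_set_fun (set xs) f" and selA: "\<forall>A. A \<noteq> {} \<longrightarrow> sel A \<in> A"
    and apos: "\<alpha> > 0" and epos: "\<epsilon> > 0" and Dsub: "D \<subseteq> set xs" and cardD: "card D \<le> d"
    and inv: "invA xs \<alpha> (y # ys) (I, C, w)"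
  shows "finite (set_pmf (phaseA_step f p Ms sel \<alpha> \<epsilon> d y (I, C, w))) \<and>
         (\<forall>s\<in>set_pmf (phaseA_step f p Ms sel \<alpha> \<epsilon> d y (I, C, w)). invA xs \<alpha> ys s) \<and>
         measure_pmf.expectation (phaseA_step f p Ms sel \<alpha> \<epsilon> d y (I, C, w)) (QA xs \<epsilon> D) \<ge> QA xs \<epsilon> D (I, C, w)"
proof -
  define C2 where "C2 = {v \<in> insert y C. keep f p Ms sel \<alpha> w I v}"
  define g where "g = (\<lambda>v. marg f v I)"
  define h where "h = (\<lambda>v. ((I \<union> {v}) - the (Exchange p Ms sel w v I), C2 - {v}, w(v := marg f v I)))"
  have I: "set (y#ys) \<subseteq> set xs" "distinct (y#ys)" "I \<subseteq> set xs" "C \<subseteq> set xs"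
     "I \<inter> C = {}" "I \<inter> set (y#ys) = {}" "C \<inter> set (y#ys) = {}" "\<forall>v\<in>C \<union> set (y#ys). w v = 0"
     "\<forall>v. w v \<ge> 0" "sum w (set xs) \<le> (1 + 1 / \<alpha>) * sum w I"
    using inv unfolding invA_def by auto
  have C2sub: "C2 \<subseteq> insert y C" unfolding C2_def by auto
  have C2xs: "C2 \<subseteq> set xs" using C2sub I by auto
  have fC2: "finite C2" using C2xs finite_subset by blast
  have g0: "\<forall>v\<in>C2. g v \<ge> 0" unfolding g_def using C2xs I(3) by (auto intro!: marg_nonneg[OF mono])
  have invC2: "invA xs \<alpha> ys (I, C2, w)"
    using I C2sub unfolding invA_def by auto
  show ?thesis
  proof (cases "C2 \<noteq> {} \<and> real (card C2) \<ge> real d / \<epsilon>")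
    case False
    then have e: "phaseA_step f p Ms sel \<alpha> \<epsilon> d y (I, C, w) = return_pmf (I, C2, w)"
      unfolding phaseA_step_def Let_def prod.case C2_def[symmetric] using False by auto
    show ?thesis unfolding e using invC2 by (simp add: QA_def)
  next
    case True
    then have e: "phaseA_step f p Ms sel \<alpha> \<epsilon> d y (I, C, w) = map_pmf h (sample_pmf g C2)"
      unfolding phaseA_step_def Let_def prod.case C2_def[symmetric] using True by (simp add: h_def g_def)
    have sset: "set_pmf (sample_pmf g C2) \<subseteq> C2" using sample_set(1)[OF fC2 _ g0] True by blast
    have hv: "invA xs \<alpha> ys (h v) \<and> QA xs \<epsilon> D (h v) = QA xs \<epsilon> D (I, C, w) + (\<epsilon> - indicator D v) * g v"
      if v: "v \<in> C2" for v
    proof -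
      have k: "keep f p Ms sel \<alpha> w I v" using v unfolding C2_def by auto
      then obtain S where S: "Exchange p Ms sel w v I = Some S" and gS: "g v \<ge> (1 + \<alpha>) * sum w S"
        unfolding keep_def g_def by (auto split: option.splits)
      have SI: "S \<subseteq> I" by (rule exch_subset[OF selA S])
      have vI: "v \<notin> I" using v C2sub I by auto
      have wv: "w v = 0" using v C2sub I by auto
      have vxs: "v \<in> set xs" using v C2xs by auto
      have vys: "v \<notin> set ys" using v C2sub I by auto
      have fI: "finite I" using I(3) finite_subset by blast
      have vS: "v \<notin> S" using SI vI by auto
      define w' where "w' = w(v := g v)"
      have hv: "h v = ((I \<union> {v}) - S, C2 - {v}, w')" unfolding h_def w'_def g_def S by simp
      have SS0: "sum w S \<ge> 0" using I(9) by (simp add: sum_nonneg)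
      have gv0: "g v \<ge> 0" using g0 v by auto
      have I'eq: "(I \<union> {v}) - S = insert v (I - S)" using vS by auto
      have "sum w' ((I \<union> {v}) - S) = g v + sum w (I - S)"
        unfolding I'eq using vI fI by (simp add: w'_def) (intro sum.cong, auto)
      also have "sum w (I - S) = sum w I - sum w S" using fI SI by (simp add: sum_diff)
      finally have eI: "sum w' ((I \<union> {v}) - S) = g v + sum w I - sum w S" by simp
      have eX: "sum w' (set xs) = sum w (set xs) + g v"
        unfolding w'_def using sum_upd[of "set xs" v w "g v"] vxs wv by simp
      have eD: "sum w' D = sum w D + indicator D v * g v"
      proof (cases "v \<in> D")
        case True
        have "finite D" using Dsub finite_subset by blast
        then show ?thesis unfolding w'_def using True wv sum_upd[of D v w "g v"] by simp
      next
        case False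
        then show ?thesis unfolding w'_def using sum_upd_out[of v D w "g v"] by simp
      qed
      have key: "(1 + 1 / \<alpha>) * (g v - sum w S) \<ge> g v"
      proof -
        have "(1 + 1 / \<alpha>) * (g v - sum w S) - g v = (g v - (1 + \<alpha>) * sum w S) / \<alpha>"
          using apos by (simp add: field_simps)
        also have "\<dots> \<ge> 0" using gS apos by simp
        finally show ?thesis by simp
      qed
      have pot: "sum w' (set xs) \<le> (1 + 1 / \<alpha>) * sum w' ((I \<union> {v}) - S)"
      proof -
        have "(1 + 1 / \<alpha>) * sum w' ((I \<union> {v}) - S) = (1 + 1 / \<alpha>) * sum w I + (1 + 1 / \<alpha>) * (g v - sum w S)"
          unfolding eI by (simp add: algebra_simps)
        then show ?thesis using eX key I(10) by linarith
      qed
      have "invA xs \<alpha> ys (h v)"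
        unfolding hv invA_def using I vys vxs pot gv0 C2sub C2xs SI
        by (auto simp: w'_def)
      moreover have "QA xs \<epsilon> D (h v) = QA xs \<epsilon> D (I, C, w) + (\<epsilon> - indicator D v) * g v"
        unfolding hv QA_def using eX eD by (simp add: algebra_simps)
      ultimately show ?thesis by blast
    qed
    have fin: "finite (set_pmf (map_pmf h (sample_pmf g C2)))"
      using sset fC2 finite_subset by auto
    have "measure_pmf.expectation (map_pmf h (sample_pmf g C2)) (QA xs \<epsilon> D)
        = measure_pmf.expectation (sample_pmf g C2) (\<lambda>v. QA xs \<epsilon> D (h v))" by simp
    also have "\<dots> = (\<Sum>v\<in>C2. QA xs \<epsilon> D (h v) * pmf (sample_pmf g C2) v)"
      by (rule integral_measure_pmf_real) (use fC2 sset in auto)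
    also have "\<dots> = (\<Sum>v\<in>C2. (QA xs \<epsilon> D (I, C, w) + (\<epsilon> - indicator D v) * g v) * pmf (sample_pmf g C2) v)"
      using hv by (intro sum.cong) auto
    also have "\<dots> = measure_pmf.expectation (sample_pmf g C2) (\<lambda>v. QA xs \<epsilon> D (I, C, w) + (\<epsilon> - indicator D v) * g v)"
      by (rule integral_measure_pmf_real[symmetric]) (use fC2 sset in auto)
    also have "\<dots> = QA xs \<epsilon> D (I, C, w) + measure_pmf.expectation (sample_pmf g C2) (\<lambda>v. (\<epsilon> - indicator D v) * g v)"
    proof -
      have fs: "finite (set_pmf (sample_pmf g C2))" using fC2 sset finite_subset by blast
      show ?thesis
        by (subst Bochner_Integration.integral_add[OF integrable_measure_pmf_finite[OF fs] integrable_measure_pmf_finite[OF fs]]) simp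
    qed
    also have "\<dots> \<ge> QA xs \<epsilon> D (I, C, w)"
    proof -
      have fD: "finite D" using Dsub finite_subset by blast
      have "real (card (C2 \<inter> D)) \<le> real d" using card_mono[OF fD, of "C2 \<inter> D"] cardD by auto
      also have "real d \<le> \<epsilon> * card C2" using True epos by (simp add: field_simps)
      finally have "real (card (C2 \<inter> D)) \<le> \<epsilon> * card C2" .
      then show ?thesis using sample_exp[OF fC2 _ g0] True by auto
    qed
    finally have E: "QA xs \<epsilon> D (I, C, w) \<le> measure_pmf.expectation (map_pmf h (sample_pmf g C2)) (QA xs \<epsilon> D)" .
    show ?thesis unfolding e using fin E hv sset by auto
  qed
qed


lemma exp_mono_fin:
  fixes F G :: "'b \<Rightarrow> real"
  assumes "finite (set_pmf M)" "\<forall>x\<in>set_pmf M. F x \<le> G x"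
  shows "measure_pmf.expectation M F \<le> measure_pmf.expectation M G"
proof -
  have "measure_pmf.expectation M F = (\<Sum>a\<in>set_pmf M. F a * pmf M a)"
    by (rule integral_measure_pmf_real) (use assms in auto)
  also have "\<dots> \<le> (\<Sum>a\<in>set_pmf M. G a * pmf M a)"
    using assms(2) by (intro sum_mono mult_right_mono) auto
  also have "\<dots> = measure_pmf.expectation M G"
    by (rule integral_measure_pmf_real[symmetric]) (use assms in auto)
  finally show ?thesis .
qed

lemma run_props:
  assumes mono: "monotone_set_fun (set xs) f" and selA: "\<forall>A. A \<noteq> {} \<longrightarrow> sel A \<in> A"
    and apos: "\<alpha> > 0" and epos: "\<epsilon> > 0" and Dsub: "D \<subseteq> set xs" and cardD: "card D \<le> d"
  shows "invA xs \<alpha> ys st \<Longrightarrow> finite (set_pmf (phaseA_run f p Ms sel \<alpha> \<epsilon> d ys st)) \<and>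
         (\<forall>s\<in>set_pmf (phaseA_run f p Ms sel \<alpha> \<epsilon> d ys st). invA xs \<alpha> [] s) \<and>
         measure_pmf.expectation (phaseA_run f p Ms sel \<alpha> \<epsilon> d ys st) (QA xs \<epsilon> D) \<ge> QA xs \<epsilon> D st"
proof (induction ys arbitrary: st)
  case Nil
  then show ?case by simp
next
  case (Cons y ys)
  obtain I C w where st: "st = (I, C, w)" by (cases st) auto
  let ?M = "phaseA_step f p Ms sel \<alpha> \<epsilon> d y st"
  let ?N = "phaseA_run f p Ms sel \<alpha> \<epsilon> d ys"
  have S: "finite (set_pmf ?M) \<and> (\<forall>s\<in>set_pmf ?M. invA xs \<alpha> ys s) \<and>
         measure_pmf.expectation ?M (QA xs \<epsilon> D) \<ge> QA xs \<epsilon> D st"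
    unfolding st by (rule step_props[OF mono selA apos epos Dsub cardD]) (use Cons.prems st in simp)
  have IH: "\<forall>s\<in>set_pmf ?M. finite (set_pmf (?N s)) \<and> (\<forall>s'\<in>set_pmf (?N s). invA xs \<alpha> [] s') \<and>
         measure_pmf.expectation (?N s) (QA xs \<epsilon> D) \<ge> QA xs \<epsilon> D s"
    using S Cons.IH by blast
  have e: "phaseA_run f p Ms sel \<alpha> \<epsilon> d (y # ys) st = bind_pmf ?M ?N" by simp
  have "measure_pmf.expectation (bind_pmf ?M ?N) (QA xs \<epsilon> D) = measure_pmf.expectation ?M (\<lambda>s. measure_pmf.expectation (?N s) (QA xs \<epsilon> D))"
    by (rule int_bind_fin) (use S IH in auto)
  also have "\<dots> \<ge> measure_pmf.expectation ?M (QA xs \<epsilon> D)"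
    by (rule exp_mono_fin) (use S IH in auto)
  finally have "measure_pmf.expectation (bind_pmf ?M ?N) (QA xs \<epsilon> D) \<ge> QA xs \<epsilon> D st" using S by linarith
  then show ?case unfolding e using S IH by auto
qed


lemma outcome:
  assumes mono: "monotone_set_fun (set xs) f" and selA: "\<forall>A. A \<noteq> {} \<longrightarrow> sel A \<in> A"
    and apos: "\<alpha> > 0" and epos: "\<epsilon> > 0" and Dsub: "D \<subseteq> set xs" and dist: "distinct xs"
    and inv: "invA xs \<alpha> [] (S1, C, w)"
    and B: "phaseB f p Ms sel \<alpha> xs D (S1, C, w) = (S2, w2)"
  shows "sum w2 (S2 - D) \<ge> (1 - (1 + 1 / \<alpha>) * \<epsilon>) * sum w2 S2 + QA xs \<epsilon> D (S1, C, w)"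
proof -
  have I: "S1 \<subseteq> set xs" "C \<subseteq> set xs" "S1 \<inter> C = {}" "\<forall>v. w v \<ge> 0"
    "sum w (set xs) \<le> (1 + 1 / \<alpha>) * sum w S1"
    using inv unfolding invA_def by auto
  define vs where "vs = filter (\<lambda>v. v \<in> C - D) xs"
  have svs: "set vs = C - D" unfolding vs_def using I(2) by auto
  have r: "phaseB_run f p Ms sel \<alpha> vs (S1, w) = (S2, w2)" using B unfolding phaseB_def vs_def by simp
  have P: "S2 \<subseteq> S1 \<union> set vs \<and> (\<forall>u. u \<notin> set vs \<longrightarrow> w2 u = w u) \<and> sum w S1 \<le> sum w2 S2 \<and> (\<forall>u. w2 u \<ge> 0)"
    by (rule phaseB_props[OF mono selA apos, where I = S1 and w = w]) (use dist I svs r in \<open>auto simp: vs_def\<close>)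
  have fS2: "finite S2" using P I(1,2) svs by (meson finite_Un finite_set finite_subset List.finite_set)
  have fD: "finite D" using Dsub finite_subset by blast
  have sub: "S2 \<inter> D \<subseteq> S1" using P svs by auto
  have "sum w2 (S2 \<inter> D) = sum w (S2 \<inter> D)"
    using P svs by (intro sum.cong) auto
  also have "\<dots> \<le> sum w D" using fD I(4) by (intro sum_mono2) auto
  finally have d1: "sum w2 (S2 \<inter> D) \<le> sum w D" .
  have d2: "sum w2 S2 = sum w2 (S2 \<inter> D) + sum w2 (S2 - D)" using fS2 by (rule sum.Int_Diff)
  have d3: "sum w (set xs) \<le> (1 + 1 / \<alpha>) * sum w2 S2"
    using I(5) P apos by (smt (verit) divide_pos_pos mult_left_mono)
  have d4: "\<epsilon> * sum w (set xs) \<le> \<epsilon> * ((1 + 1 / \<alpha>) * sum w2 S2)"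
    using d3 epos by simp
  show ?thesis unfolding QA_def using d1 d2 d4 by (simp add: algebra_simps)
qed

theorem lemma1:
  fixes xs :: "'a list" and f :: "'a set \<Rightarrow> real" and p :: nat
    and Ms :: "nat \<Rightarrow> 'a set \<Rightarrow> bool" and sel :: "'a set \<Rightarrow> 'a"
    and \<alpha> \<epsilon> :: real and d :: nat and D :: "'a set"
  assumes "distinct xs"
    and "f {} = 0"
    and "\<forall>X. X \<subseteq> set xs \<longrightarrow> f X \<ge> 0"
    and "monotone_set_fun (set xs) f"
    and "submodular (set xs) f"
    and "p \<ge> 1"
    and "\<forall>j<p. matroid (set xs) (Ms j)"
    and "\<forall>A. A \<noteq> {} \<longrightarrow> sel A \<in> A"
    and "\<alpha> > 0" and "\<epsilon> > 0"
    and "D \<subseteq> set xs" and "card D \<le> d"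
  shows "measure_pmf.expectation (phaseA f p Ms sel \<alpha> \<epsilon> d xs)
            (\<lambda>st. case phaseB f p Ms sel \<alpha> xs D st of (S2, w) \<Rightarrow> sum w (S2 - D))
         \<ge> (1 - (1 + 1 / \<alpha>) * \<epsilon>) *
           measure_pmf.expectation (phaseA f p Ms sel \<alpha> \<epsilon> d xs)
            (\<lambda>st. case phaseB f p Ms sel \<alpha> xs D st of (S2, w) \<Rightarrow> sum w S2)"
proof -
  let ?M = "phaseA f p Ms sel \<alpha> \<epsilon> d xs"
  let ?L = "\<lambda>st. case phaseB f p Ms sel \<alpha> xs D st of (S2, w) \<Rightarrow> sum w (S2 - D)"
  let ?R = "\<lambda>st. case phaseB f p Ms sel \<alpha> xs D st of (S2, w) \<Rightarrow> sum w S2"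
  let ?c = "1 - (1 + 1 / \<alpha>) * \<epsilon>"
  have inv0: "invA xs \<alpha> xs ({}, {}, (\<lambda>_. 0))" using assms(1) unfolding invA_def by auto
  have RP: "finite (set_pmf ?M) \<and> (\<forall>s\<in>set_pmf ?M. invA xs \<alpha> [] s) \<and>
         measure_pmf.expectation ?M (QA xs \<epsilon> D) \<ge> QA xs \<epsilon> D ({}, {}, (\<lambda>_. 0))"
    unfolding phaseA_def by (rule run_props[OF assms(4,8,9,10,11,12) inv0])
  have Q0: "QA xs \<epsilon> D ({}, {}, (\<lambda>_. 0)) = 0" unfolding QA_def by simp
  have pw: "?L s \<ge> ?c * ?R s + QA xs \<epsilon> D s" if s: "s \<in> set_pmf ?M" for s
  proof -
    obtain S1 C w where st: "s = (S1, C, w)" by (cases s) auto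
    obtain S2 w2 where B: "phaseB f p Ms sel \<alpha> xs D (S1, C, w) = (S2, w2)"
      by (cases "phaseB f p Ms sel \<alpha> xs D (S1, C, w)") auto
    have "invA xs \<alpha> [] (S1, C, w)" using RP s st by auto
    from outcome[OF assms(4,8,9,10,11,1) this B] show ?thesis unfolding st B by simp
  qed
  have fs: "finite (set_pmf ?M)" using RP by blast
  have "measure_pmf.expectation ?M ?L \<ge> measure_pmf.expectation ?M (\<lambda>s. ?c * ?R s + QA xs \<epsilon> D s)"
    by (rule exp_mono_fin) (use fs pw in auto)
  also have "measure_pmf.expectation ?M (\<lambda>s. ?c * ?R s + QA xs \<epsilon> D s)
      = ?c * measure_pmf.expectation ?M ?R + measure_pmf.expectation ?M (QA xs \<epsilon> D)"
    by (subst Bochner_Integration.integral_add[OF integrable_measure_pmf_finite[OF fs] integrable_measure_pmf_finite[OF fs]]) simp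
  finally show ?thesis using RP Q0 by linarith
qed

end
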